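(* There exists a constant $c>0$ such that for all sufficiently large $n$ there is a partial function $f$ on $\{0,1\}^n$ that is minimally non-extendable and whose domain satisfies $|\mathrm{D}(f)| \ge 2^{cn}$ (i.e. $|\mathrm{D}(f)| = 2^{\Omega(n)}$).
   Context: A partial function $f$ on $\{0,1\}^n$ is a real-valued function defined on a subset $\mathrm{D}(f)\subseteq\{0,1\}^n$. A function $g:\{0,1\}^n\to\mathbb{R}$ is submodular if $g(x+\mathbf{e}_i)-g(x) \ge g(y+\mathbf{e}_i)-g(y)$ for all $i$ and all $x\le y$ (coordinatewise) with $x_i=y_i=0$, where $\mathbf{e}_i$ is the $i$-th standard basis vector. A partial function $f$ is extendable if there is a submodular $g:\{0,1\}^n\to\mathbb{R}$ agreeing with $f$ on $\mathrm{D}(f)$. For $\mathcal{A}\subseteq\{0,1\}^n$, $f|_{\mathcal{A}}$ is the partial function agreeing with $f$ on $\mathcal{A}\cap \mathrm{D}(f)$ and undefined elsewhere. $f$ is minimally non-extendable if $f$ is not extendable but $f|_{\mathcal{A}}$ is extendable for every proper subset $\mathcal{A}\subsetneq \mathrm{D}(f)$. *)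

theory Defs
  imports Complex_Main
begin

text \<open>A point x of {0,1}^n is encoded as its support, a subset of {..<n};
  x \<le> y coordinatewise is set inclusion, and x + e_i (for x_i = 0) is insert i x.\<close>

definition submodular :: "nat \<Rightarrow> (nat set \<Rightarrow> real) \<Rightarrow> bool" where
  "submodular n g \<longleftrightarrow>
     (\<forall>i<n. \<forall>X Y. X \<subseteq> Y \<and> Y \<subseteq> {..<n} \<and> i \<notin> Y \<longrightarrow>
        g (insert i X) - g X \<ge> g (insert i Y) - g Y)"

definition partial_fun_on :: "nat \<Rightarrow> (nat set \<rightharpoonup> real) \<Rightarrow> bool" where
  "partial_fun_on n f \<longleftrightarrow> dom f \<subseteq> Pow {..<n}"

definition extendable :: "nat \<Rightarrow> (nat set \<rightharpoonup> real) \<Rightarrow> bool" where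
  "extendable n f \<longleftrightarrow>
     (\<exists>g. submodular n g \<and> (\<forall>x\<in>dom f. f x = Some (g x)))"

definition minimally_non_extendable :: "nat \<Rightarrow> (nat set \<rightharpoonup> real) \<Rightarrow> bool" where
  "minimally_non_extendable n f \<longleftrightarrow>
     \<not> extendable n f \<and> (\<forall>A. A \<subset> dom f \<longrightarrow> extendable n (f |` A))"

end

theory Submission
  imports Defs
begin


definition sq :: "(nat set \<Rightarrow> real) \<Rightarrow> nat set \<Rightarrow> nat \<Rightarrow> nat \<Rightarrow> real" where
 "sq g X i j = g (insert i X) + g (insert j X) - g X - g (insert i (insert j X))"

lemma sq_sym: "sq g X i j = sq g X j i"
  unfolding sq_def by (simp add: insert_commute)

lemma local_to_submod:
  assumes H: "\<And>X i j. X \<subseteq> {..<n} \<Longrightarrow> i < n \<Longrightarrow> j < n \<Longrightarrow> i \<notin> X \<Longrightarrow> j \<notin> X \<Longrightarrow> i \<noteq> j \<Longrightarrow> sq g X i j \<ge> 0"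
  shows "submodular n g"
proof -
  have main: "\<And>F. finite F \<Longrightarrow> (\<forall>X i. X \<subseteq> {..<n} \<and> F \<subseteq> {..<n} \<and> i < n \<and> i \<notin> X \<and> i \<notin> F \<longrightarrow>
        g (insert i X) - g X \<ge> g (insert i (X \<union> F)) - g (X \<union> F))"
  proof -
    fix F :: "nat set" assume "finite F"
    then show "?thesis F"
    proof (induction F rule: finite_induct)
      case empty then show ?case by simp
    next
      case (insert j F)
      show ?case
      proof (intro allI impI)
        fix X i assume a: "X \<subseteq> {..<n} \<and> insert j F \<subseteq> {..<n} \<and> i < n \<and> i \<notin> X \<and> i \<notin> insert j F"
        have ih: "g (insert i X) - g X \<ge> g (insert i (X \<union> F)) - g (X \<union> F)"
          using insert.IH a by auto
        show "g (insert i X) - g X \<ge> g (insert i (X \<union> insert j F)) - g (X \<union> insert j F)"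
        proof (cases "j \<in> X \<union> F")
          case True
          then have "X \<union> insert j F = X \<union> F" by auto
          then show ?thesis using ih by simp
        next
          case False
          have "sq g (X \<union> F) i j \<ge> 0"
            using H[of "X \<union> F" i j] a False by auto
          then have "g (insert i (X \<union> F)) - g (X \<union> F) \<ge> g (insert i (insert j (X \<union> F))) - g (insert j (X \<union> F))"
            unfolding sq_def by simp
          moreover have "X \<union> insert j F = insert j (X \<union> F)" by auto
          ultimately show ?thesis using ih by simp
        qed
      qed
    qed
  qed
  show ?thesis unfolding submodular_def
  proof (intro allI impI)
    fix i X Y assume i: "i < n" and a: "X \<subseteq> Y \<and> Y \<subseteq> {..<n} \<and> i \<notin> Y"
    have "finite (Y - X)" using a finite_subset by blast
    from main[OF this] have "g (insert i X) - g X \<ge> g (insert i (X \<union> (Y - X))) - g (X \<union> (Y - X))"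
      using a i by blast
    moreover have "X \<union> (Y - X) = Y" using a by auto
    ultimately show "g (insert i Y) - g Y \<le> g (insert i X) - g X" by simp
  qed
qed

lemma submod_sq:
  assumes "submodular n g" "X \<subseteq> {..<n}" "i < n" "j < n" "i \<notin> X" "j \<notin> X" "i \<noteq> j"
  shows "sq g X i j \<ge> 0"
proof -
  have "g (insert i X) - g X \<ge> g (insert i (insert j X)) - g (insert j X)"
    using assms unfolding submodular_def by (metis insert_subset lessThan_iff subset_insertI insertE)
  then show ?thesis unfolding sq_def by simp
qed



definition pr :: "nat \<Rightarrow> nat set" where "pr m = {2*m, Suc (2*m)}"

lemma in_pr: "i \<in> pr l \<longleftrightarrow> i div 2 = l"
  unfolding pr_def by auto

definition stage :: "nat \<Rightarrow> nat \<Rightarrow> nat set \<Rightarrow> bool" where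
 "stage k h P \<longleftrightarrow> P \<subseteq> {2*h..<2*k} \<and> (\<forall>m. h \<le> m \<longrightarrow> m < k \<longrightarrow> (2*m \<in> P \<longleftrightarrow> Suc (2*m) \<notin> P))"

definition vr :: "nat \<Rightarrow> nat set \<Rightarrow> real" where
 "vr m X = (if (2*m \<in> X) = (Suc (2*m) \<in> X) then 1 else 0)"

definition dl :: "nat \<Rightarrow> nat \<Rightarrow> nat set \<Rightarrow> real" where
 "dl k l X = real (card (X \<inter> {..<2*l})) + real (card (X - {..<2*k})) + (\<Sum>m\<in>{Suc l..<k}. vr m X)"

definition W :: "nat \<Rightarrow> nat \<Rightarrow> nat set \<Rightarrow> real" where
 "W k l X = (if 2*l \<in> X \<and> Suc (2*l) \<in> X then 3 - dl k l X else 0)"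

definition g0 :: "nat \<Rightarrow> nat set \<Rightarrow> real" where
 "g0 k X = - 3 * real (card X) * (real (card X) - 1) / 2 + (\<Sum>l<k. W k l X)"

lemma card_ins_int: "finite X \<Longrightarrow> i \<notin> X \<Longrightarrow> real (card (insert i X \<inter> A)) = real (card (X \<inter> A)) + (if i \<in> A then 1 else 0)"
  by (cases "i \<in> A") (auto simp: Int_insert_left)

lemma card_ins_diff: "finite X \<Longrightarrow> i \<notin> X \<Longrightarrow> real (card (insert i X - A)) = real (card (X - A)) + (if i \<in> A then 0 else 1)"
  by (cases "i \<in> A") (auto simp: insert_Diff_if)

lemma vr_nonneg: "0 \<le> vr m X" and vr_le1: "vr m X \<le> 1"
  unfolding vr_def by auto

lemma dl_nonneg: "0 \<le> dl k l X"
  unfolding dl_def by (auto intro!: sum_nonneg add_nonneg_nonneg simp: vr_nonneg)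

lemma sq_vr: "i \<noteq> j \<Longrightarrow> i \<notin> X \<Longrightarrow> j \<notin> X \<Longrightarrow> sq (vr m) X i j \<le> 0"
  unfolding sq_def vr_def by auto

lemma sq_dl: assumes "finite X" "i \<notin> X" "j \<notin> X" "i \<noteq> j"
  shows "sq (dl k l) X i j \<le> 0"
proof -
  have fi: "finite (insert j X)" using assms by simp
  have e1: "sq (dl k l) X i j = (\<Sum>m\<in>{Suc l..<k}. sq (vr m) X i j)"
    unfolding sq_def dl_def
    using assms card_ins_int[OF assms(1,2)] card_ins_int[OF assms(1,3)] card_ins_int[OF fi, of i]
      card_ins_diff[OF assms(1,2)] card_ins_diff[OF assms(1,3)] card_ins_diff[OF fi, of i]
    by (simp add: sum_subtractf[symmetric] sum.distrib[symmetric] algebra_simps)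
  show ?thesis unfolding e1 by (rule sum_nonpos) (use sq_vr assms in auto)
qed



lemma dl_indep: assumes "l < k" "i \<in> pr l" shows "dl k l (insert i X) = dl k l X"
proof -
  have i: "i = 2*l \<or> i = Suc (2*l)" using assms unfolding pr_def by auto
  have "insert i X \<inter> {..<2*l} = X \<inter> {..<2*l}" using i by auto
  moreover have "insert i X - {..<2*k} = X - {..<2*k}" using i assms by auto
  moreover have "vr m (insert i X) = vr m X" if "m \<in> {Suc l..<k}" for m
  proof -
    have mm: "Suc l \<le> m" using that by auto
    have "2*m \<noteq> i" "Suc (2*m) \<noteq> i" using i mm by presburger+
    then show ?thesis unfolding vr_def by auto
  qed
  ultimately show ?thesis unfolding dl_def by simp
qed

lemma vr_other: "j div 2 \<noteq> m \<Longrightarrow> vr m (insert j X) = vr m X"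
  unfolding vr_def by auto

lemma sum_vr_ins: "finite S \<Longrightarrow> (\<Sum>m\<in>S. vr m (insert j X)) \<ge> (\<Sum>m\<in>S. vr m X) - 1"
proof (cases "j div 2 \<in> S")
  case True
  assume f: "finite S"
  have "(\<Sum>m\<in>S. vr m (insert j X)) = vr (j div 2) (insert j X) + (\<Sum>m\<in>S - {j div 2}. vr m (insert j X))"
    using True f by (simp add: sum.remove)
  moreover have "(\<Sum>m\<in>S. vr m X) = vr (j div 2) X + (\<Sum>m\<in>S - {j div 2}. vr m X)"
    using True f by (simp add: sum.remove)
  moreover have "(\<Sum>m\<in>S - {j div 2}. vr m (insert j X)) = (\<Sum>m\<in>S - {j div 2}. vr m X)"
    by (rule sum.cong) (auto intro: vr_other)
  ultimately show ?thesis using vr_nonneg[of "j div 2" "insert j X"] vr_le1[of "j div 2" X] by linarith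
next
  case False
  have "(\<Sum>m\<in>S. vr m (insert j X)) = (\<Sum>m\<in>S. vr m X)"
    by (rule sum.cong) (use False in \<open>auto intro: vr_other\<close>)
  then show ?thesis by simp
qed

lemma dl_ins_ge: assumes "finite X" "j \<notin> X" shows "dl k l (insert j X) \<ge> dl k l X - 1"
  unfolding dl_def using card_ins_int[OF assms, of "{..<2*l}"] card_ins_diff[OF assms, of "{..<2*k}"]
    sum_vr_ins[where S="{Suc l..<k}" and j=j and X=X]
  by (auto split: if_splits)

lemma dl_small_stage: assumes "finite X" "dl k l X < 1" "2*l \<notin> X" "Suc (2*l) \<notin> X"
  shows "stage k (Suc l) X"
proof -
  have s0: "0 \<le> (\<Sum>m\<in>{Suc l..<k}. vr m X)" by (rule sum_nonneg) (simp add: vr_nonneg)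
  have c1: "card (X \<inter> {..<2*l}) = 0" using assms(2) s0 unfolding dl_def by linarith
  have c2: "card (X - {..<2*k}) = 0" using assms(2) s0 unfolding dl_def by linarith
  have e1: "X \<inter> {..<2*l} = {}" using c1 assms(1) by simp
  have e2: "X - {..<2*k} = {}" using c2 assms(1) by simp
  have v: "vr m X = 0" if "m \<in> {Suc l..<k}" for m
  proof -
    have "vr m X \<le> (\<Sum>m\<in>{Suc l..<k}. vr m X)"
      by (rule member_le_sum) (use that in \<open>auto simp: vr_nonneg\<close>)
    then have "vr m X < 1" using assms(2) unfolding dl_def by simp
    then show ?thesis unfolding vr_def by (auto split: if_splits)
  qed
  have sub: "X \<subseteq> {2 * Suc l..<2*k}"
  proof
    fix x assume x: "x \<in> X"
    then have "x \<ge> 2*l" "x < 2*k" using e1 e2 by auto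
    moreover have "x \<noteq> 2*l" "x \<noteq> Suc (2*l)" using x assms by auto
    ultimately show "x \<in> {2 * Suc l..<2*k}" by auto
  qed
  show ?thesis unfolding stage_def
  proof (intro conjI sub allI impI)
    fix m assume "Suc l \<le> m" "m < k"
    then have "vr m X = 0" using v by auto
    then show "(2*m \<in> X) = (Suc (2*m) \<notin> X)" unfolding vr_def by (auto split: if_splits)
  qed
qed



lemma sq_A: assumes "finite X" "i \<notin> X" "j \<notin> X" "i \<noteq> j"
  shows "sq (\<lambda>X. - 3 * real (card X) * (real (card X) - 1) / 2) X i j = 3"
proof -
  have "card (insert i X) = Suc (card X)" "card (insert j X) = Suc (card X)"
    "card (insert i (insert j X)) = Suc (Suc (card X))" using assms by auto
  then show ?thesis unfolding sq_def by (simp add: field_simps)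
qed

lemma sq_W1: assumes "l < k" "i \<in> pr l" "j \<in> pr l" "i \<noteq> j" "i \<notin> X" "j \<notin> X"
  shows "sq (W k l) X i j = dl k l X - 3"
proof -
  have ij: "(i = 2*l \<and> j = Suc (2*l)) \<or> (i = Suc (2*l) \<and> j = 2*l)" using assms unfolding pr_def by auto
  have "dl k l (insert i (insert j X)) = dl k l X" using dl_indep assms by simp
  then show ?thesis using ij assms unfolding sq_def W_def by auto
qed

lemma sq_W2: assumes "l < k" "i \<in> pr l" "j \<notin> pr l" "i \<noteq> j" "i \<notin> X" "j \<notin> X" "finite X"
  shows "sq (W k l) X i j \<ge> -1"
proof -
  have i2: "i = 2*l \<or> i = Suc (2*l)" using assms(2) unfolding pr_def by auto
  define ot where "ot = (if i = 2*l then Suc (2*l) else 2*l)"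
  have ot: "pr l = {i, ot}" "ot \<noteq> i" using i2 unfolding ot_def pr_def by auto
  have jo: "j \<noteq> ot" using ot assms(3) by auto
  have a: "dl k l (insert i (insert j X)) = dl k l (insert j X)" using dl_indep assms by simp
  have b: "dl k l (insert i X) = dl k l X" using dl_indep assms by simp
  have c: "dl k l (insert j X) \<ge> dl k l X - 1" using dl_ins_ge assms by simp
  have Wd: "W k l Y = (if i \<in> Y \<and> ot \<in> Y then 3 - dl k l Y else 0)" for Y
  proof -
    have "(2*l \<in> Y \<and> Suc (2*l) \<in> Y) = (i \<in> Y \<and> ot \<in> Y)" using i2 unfolding ot_def by auto
    then show ?thesis unfolding W_def by simp
  qed
  have "sq (W k l) X i j = (if ot \<in> X then dl k l (insert j X) - dl k l X else 0)"
  proof -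
    have 1: "W k l (insert i X) = (if ot \<in> X then 3 - dl k l X else 0)" unfolding Wd using b ot by simp
    have 2: "W k l (insert j X) = 0" unfolding Wd using assms(4,5) by simp
    have 3: "W k l X = 0" unfolding Wd using assms(5) by simp
    have 4: "W k l (insert i (insert j X)) = (if ot \<in> X then 3 - dl k l (insert j X) else 0)"
      unfolding Wd using a ot jo by simp
    show ?thesis unfolding sq_def 1 2 3 4 by simp
  qed
  then show ?thesis using c by auto
qed

lemma sq_W3: assumes "i \<notin> pr l" "j \<notin> pr l" "i \<noteq> j" "i \<notin> X" "j \<notin> X" "finite X"
  shows "sq (W k l) X i j \<ge> 0"
proof -
  have ij: "i \<noteq> 2*l" "i \<noteq> Suc (2*l)" "j \<noteq> 2*l" "j \<noteq> Suc (2*l)" using assms unfolding pr_def by auto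
  have s: "sq (dl k l) X i j \<le> 0" using sq_dl assms by simp
  define c where "c = (2*l \<in> X \<and> Suc (2*l) \<in> X)"
  have Wd: "W k l Y = (if c then 3 - dl k l Y else 0)" if "Y = insert i X \<or> Y = insert j X \<or> Y = X \<or> Y = insert i (insert j X)" for Y
  proof -
    have "(2*l \<in> Y \<and> Suc (2*l) \<in> Y) = c" using that ij unfolding c_def by auto
    then show ?thesis unfolding W_def by simp
  qed
  have "sq (W k l) X i j = (if c then - sq (dl k l) X i j else 0)"
    unfolding sq_def by (simp add: Wd)
  then show ?thesis using s by simp
qed

lemma sq_W_zero: assumes "\<not> (2*l \<in> insert i (insert j X) \<and> Suc (2*l) \<in> insert i (insert j X))"
  shows "sq (W k l) X i j = 0"
  using assms unfolding sq_def W_def by auto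

lemma sq_sum: "sq (\<lambda>X. \<Sum>l\<in>S. F l X) X i j = (\<Sum>l\<in>S. sq (F l) X i j)"
  unfolding sq_def by (simp add: sum.distrib sum_subtractf)

lemma sq_add: "sq (\<lambda>X. f X + g X) X i j = sq f X i j + sq g X i j"
  unfolding sq_def by simp

lemma sq_diff: "sq (\<lambda>X. f X - g X) X i j = sq f X i j - sq g X i j"
  unfolding sq_def by simp

lemma sq_g0: assumes "finite X" "i \<notin> X" "j \<notin> X" "i \<noteq> j"
  shows "sq (g0 k) X i j = 3 + (\<Sum>l<k. sq (W k l) X i j)"
proof -
  have "g0 k = (\<lambda>X. - 3 * real (card X) * (real (card X) - 1) / 2 + (\<Sum>l<k. W k l X))"
    unfolding g0_def by (rule ext) simp
  then show ?thesis using sq_add[of "\<lambda>X. - 3 * real (card X) * (real (card X) - 1) / 2" "\<lambda>X. \<Sum>l<k. W k l X" X i j]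
      sq_sum[where S="{..<k}" and F="W k" and X=X and i=i and j=j] sq_A[OF assms] by simp
qed

lemma sum_pr_le1: "(\<Sum>l<k. (if i \<in> pr l then 1 else 0::real)) \<le> 1"
proof -
  have "(\<Sum>l<k. (if i \<in> pr l then 1 else 0::real)) = (\<Sum>l<k. (if l = i div 2 then 1 else 0::real))"
    by (rule sum.cong) (auto simp: in_pr)
  also have "\<dots> \<le> 1" by (simp add: sum.delta')
  finally show ?thesis .
qed



lemma stage_finite: "stage k h P \<Longrightarrow> finite P"
  unfolding stage_def using finite_subset by blast

lemma g0_sq_cases: assumes "finite X" "i \<notin> X" "j \<notin> X" "i \<noteq> j"
  shows "sq (g0 k) X i j \<ge> 1 \<or> (\<exists>l<k. i \<in> pr l \<and> j \<in> pr l \<and> stage k (Suc l) X \<and> sq (g0 k) X i j \<ge> 0)"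
proof (cases "\<exists>l<k. i \<in> pr l \<and> j \<in> pr l")
  case True
  then obtain l where l: "l < k" "i \<in> pr l" "j \<in> pr l" by blast
  have others: "sq (W k l') X i j \<ge> 0" if "l' \<in> {..<k} - {l}" for l'
  proof -
    have "i \<notin> pr l'" "j \<notin> pr l'" using l that by (auto simp: in_pr)
    then show ?thesis using sq_W3 assms by simp
  qed
  have "(\<Sum>l'<k. sq (W k l') X i j) = sq (W k l) X i j + (\<Sum>l'\<in>{..<k} - {l}. sq (W k l') X i j)"
    using l by (simp add: sum.remove)
  moreover have "(\<Sum>l'\<in>{..<k} - {l}. sq (W k l') X i j) \<ge> 0" by (rule sum_nonneg) (use others in blast)
  moreover have "sq (W k l) X i j = dl k l X - 3" using sq_W1 l assms by simp
  ultimately have ge: "sq (g0 k) X i j \<ge> dl k l X" using sq_g0[OF assms, of k] by simp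
  show ?thesis
  proof (cases "dl k l X < 1")
    case True
    have "pr l = {i, j}" using l assms(4) unfolding pr_def by auto
    then have "2*l \<notin> X" "Suc (2*l) \<notin> X" using assms unfolding pr_def by (auto simp: doubleton_eq_iff)
    then have "stage k (Suc l) X" using dl_small_stage assms(1) True by blast
    then show ?thesis using l ge dl_nonneg[of k l X] by force
  next
    case False then show ?thesis using ge by simp
  qed
next
  case False
  have each: "sq (W k l) X i j \<ge> - ((if i \<in> pr l then 1 else 0) + (if j \<in> pr l then 1 else 0))" if "l \<in> {..<k}" for l
  proof -
    have nb: "\<not> (i \<in> pr l \<and> j \<in> pr l)" using False that by auto
    show ?thesis
    proof (cases "i \<in> pr l")
      case True then show ?thesis using sq_W2[of l k i j X] nb that assms by auto
    next
      case False
      show ?thesis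
      proof (cases "j \<in> pr l")
        case True then show ?thesis using sq_W2[of l k j i X] sq_sym[of "W k l" X i j] False that assms by auto
      next
        case False2: False
        then show ?thesis using sq_W3 False assms by simp
      qed
    qed
  qed
  have A: "(\<Sum>l<k. - ((if i \<in> pr l then 1 else 0) + (if j \<in> pr l then 1 else 0))) \<le> (\<Sum>l<k. sq (W k l) X i j)"
    by (rule sum_mono) (use each in auto)
  have B: "(\<Sum>l<k. - ((if i \<in> pr l then 1 else 0) + (if j \<in> pr l then 1 else (0::real))))
     = - ((\<Sum>l<k. (if i \<in> pr l then 1 else 0)) + (\<Sum>l<k. (if j \<in> pr l then 1 else 0)))"
    by (simp add: sum_subtractf sum_negf)
  have "(\<Sum>l<k. sq (W k l) X i j) \<ge> -2" using A B sum_pr_le1[of i k] sum_pr_le1[of j k] by linarith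
  then show ?thesis using sq_g0[OF assms, of k] by simp
qed

lemma g0_node: assumes "stage k (Suc l) P" "l < k"
  shows "sq (g0 k) P (2*l) (Suc (2*l)) \<le> 0"
proof -
  have st: "P \<subseteq> {2 * Suc l..<2*k}" "\<And>m. Suc l \<le> m \<Longrightarrow> m < k \<Longrightarrow> (2*m \<in> P \<longleftrightarrow> Suc (2*m) \<notin> P)"
    using assms unfolding stage_def by auto
  have fin: "finite P" using stage_finite assms by blast
  have nin: "2*l \<notin> P" "Suc (2*l) \<notin> P" using st by auto
  have d0: "dl k l P = 0"
  proof -
    have "P \<inter> {..<2*l} = {}" using st by auto
    moreover have "card (P - {..<2*k}) = 0"
    proof -
      have "P - {..<2*k} = {}" using st by auto
      then show ?thesis by (simp only: card.empty)
    qed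
    moreover have "vr m P = 0" if "m \<in> {Suc l..<k}" for m using st(2)[of m] that unfolding vr_def by auto
    ultimately show ?thesis unfolding dl_def by (simp del: Diff_eq_empty_iff)
  qed
  have others: "sq (W k l') P (2*l) (Suc (2*l)) = 0" if "l' \<in> {..<k} - {l}" for l'
  proof (rule sq_W_zero)
    have ne: "l' \<noteq> l" "l' < k" using that by auto
    have a: "2*l' \<noteq> 2*l" "2*l' \<noteq> Suc (2*l)" "Suc (2*l') \<noteq> 2*l" "Suc (2*l') \<noteq> Suc (2*l)" using ne by presburger+
    have "\<not> (2*l' \<in> P \<and> Suc (2*l') \<in> P)"
    proof (cases "Suc l \<le> l'")
      case True then show ?thesis using st(2)[of l'] ne by auto
    next
      case False then have "2*l' < 2 * Suc l" by simp
      then show ?thesis using st(1) by auto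
    qed
    then show "\<not> (2*l' \<in> insert (2*l) (insert (Suc (2*l)) P) \<and> Suc (2*l') \<in> insert (2*l) (insert (Suc (2*l)) P))"
      using a by auto
  qed
  have "(\<Sum>l'<k. sq (W k l') P (2*l) (Suc (2*l))) = sq (W k l) P (2*l) (Suc (2*l)) + (\<Sum>l'\<in>{..<k} - {l}. sq (W k l') P (2*l) (Suc (2*l)))"
    using assms by (simp add: sum.remove)
  moreover have "sq (W k l) P (2*l) (Suc (2*l)) = dl k l P - 3" using sq_W1[of l k "2*l" "Suc (2*l)" P] assms nin unfolding pr_def by simp
  ultimately have "(\<Sum>l'<k. sq (W k l') P (2*l) (Suc (2*l))) = -3" using others d0 by simp
  then show ?thesis using sq_g0[OF fin nin, of k] by simp
qed



lemma stage_sub_eq: assumes "stage k h P" "stage k h Q" "P \<subseteq> Q" shows "P = Q"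
proof
  show "Q \<subseteq> P"
  proof
    fix y assume y: "y \<in> Q"
    define m where "m = y div 2"
    have ym: "y = 2*m \<or> y = Suc (2*m)" unfolding m_def by presburger
    have "y \<in> {2*h..<2*k}" using y assms(2) unfolding stage_def by auto
    then have hm: "h \<le> m" "m < k" using ym by auto
    have xp: "2*m \<in> P \<longleftrightarrow> Suc (2*m) \<notin> P" using assms(1) hm unfolding stage_def by auto
    have xq: "2*m \<in> Q \<longleftrightarrow> Suc (2*m) \<notin> Q" using assms(2) hm unfolding stage_def by auto
    show "y \<in> P" using xp xq ym y assms(3) by auto
  qed
qed (use assms in simp)

lemma B_not_stage: assumes "stage k (Suc l) P" "l < k"
  shows "\<not> stage k h (insert (2*l) (insert (Suc (2*l)) P))"
proof
  assume s: "stage k h (insert (2*l) (insert (Suc (2*l)) P))"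
  show False
  proof (cases "h \<le> l")
    case True then show ?thesis using s assms(2) unfolding stage_def by auto
  next
    case False then show ?thesis using s unfolding stage_def by auto
  qed
qed

lemma stage_ins: assumes "stage k (Suc l) P" "l < k" "a = 2*l \<or> a = Suc (2*l)"
  shows "stage k l (insert a P)"
proof -
  have st: "P \<subseteq> {2 * Suc l..<2*k}" "\<And>m. Suc l \<le> m \<Longrightarrow> m < k \<Longrightarrow> (2*m \<in> P \<longleftrightarrow> Suc (2*m) \<notin> P)"
    using assms unfolding stage_def by auto
  have "insert a P \<subseteq> {2*l..<2*k}" using st(1) assms(2,3) by auto
  moreover have "(2*m \<in> insert a P \<longleftrightarrow> Suc (2*m) \<notin> insert a P)" if "l \<le> m" "m < k" for m
  proof (cases "m = l")
    case True then show ?thesis using st(1) assms(3) by auto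
  next
    case False
    then have "Suc l \<le> m" using that by simp
    moreover have "2*m \<noteq> a" "Suc (2*m) \<noteq> a" using assms(3) \<open>Suc l \<le> m\<close> by presburger+
    ultimately show ?thesis using st(2)[of m] that by auto
  qed
  ultimately show ?thesis unfolding stage_def by auto
qed

lemma stage_pair_one: assumes "stage k s Q" "s \<le> l" "l < k"
  shows "2*l \<in> Q \<longleftrightarrow> Suc (2*l) \<notin> Q"
  using assms unfolding stage_def by auto

lemma stage_pair_none: assumes "stage k s Q" "l < s"
  shows "2*l \<notin> Q" "Suc (2*l) \<notin> Q"
  using assms unfolding stage_def by auto

lemma stage_empty: "stage k k {}" unfolding stage_def by auto

lemma stage_sub: "stage k h P \<Longrightarrow> P \<subseteq> {..<2*k}" unfolding stage_def by auto

lemma leaf_01: "stage k 0 T \<Longrightarrow> 0 < k \<Longrightarrow> 0 \<in> T \<or> 1 \<in> T"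
  unfolding stage_def by force

lemma stage_no01: "stage k h T \<Longrightarrow> 0 < h \<Longrightarrow> 0 \<notin> T \<and> 1 \<notin> T"
  unfolding stage_def by force

definition pQ :: "nat \<Rightarrow> nat set \<Rightarrow> nat set \<Rightarrow> real" where
  "pQ k Q Y = (if Y \<subseteq> Q \<and> (\<exists>h. stage k h Y) then 1/4 else 0)"

definition ex :: "nat set \<Rightarrow> nat set \<Rightarrow> real" where
  "ex x Y = (if Y = x then 1/4 else 0)"

lemma sq_pQ_node: assumes "stage k (Suc l) P" "l < k"
  shows "sq (pQ k Q) P (2*l) (Suc (2*l)) =
     (if P \<subseteq> Q then ((if 2*l \<in> Q then 1 else 0) + (if Suc (2*l) \<in> Q then 1 else 0) - 1) / 4 else 0)"
proof -
  have s1: "stage k l (insert (2*l) P)" "stage k l (insert (Suc (2*l)) P)" using stage_ins assms by auto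
  have 1: "pQ k Q (insert (2*l) P) = (if 2*l \<in> Q \<and> P \<subseteq> Q then 1/4 else 0)"
    unfolding pQ_def using s1 by auto
  have 2: "pQ k Q (insert (Suc (2*l)) P) = (if Suc (2*l) \<in> Q \<and> P \<subseteq> Q then 1/4 else 0)"
    unfolding pQ_def using s1 by auto
  have 3: "pQ k Q P = (if P \<subseteq> Q then 1/4 else 0)" unfolding pQ_def using assms(1) by auto
  have 4: "pQ k Q (insert (2*l) (insert (Suc (2*l)) P)) = 0" unfolding pQ_def using B_not_stage[OF assms] by auto
  show ?thesis unfolding sq_def 1 2 3 4 by auto
qed

lemma sq_bound: assumes "\<And>Y. 0 \<le> p Y" "\<And>Y. p Y \<le> 1/4" shows "sq p X i j \<ge> -1/2" "sq p X i j \<le> 1/2"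
  unfolding sq_def using assms[of "insert i X"] assms[of "insert j X"] assms[of X] assms[of "insert i (insert j X)"]
  by linarith+

lemma pQ_bounds: "0 \<le> pQ k Q Y" "pQ k Q Y \<le> 1/4" unfolding pQ_def by auto
lemma ex_bounds: "0 \<le> ex x Y" "ex x Y \<le> 1/4" unfolding ex_def by auto



lemma ext_submod:
  assumes n: "2*k \<le> n"
    and b: "\<And>X i j. sq p X i j \<ge> -1"
    and nd: "\<And>l P. l < k \<Longrightarrow> stage k (Suc l) P \<Longrightarrow> sq p P (2*l) (Suc (2*l)) \<ge> 0"
  shows "submodular n (\<lambda>Y. g0 k Y + p Y)"
proof (rule local_to_submod)
  fix X i j assume X: "X \<subseteq> {..<n}" and ij: "i < n" "j < n" "i \<notin> X" "j \<notin> X" "i \<noteq> j"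
  have fin: "finite X" using X finite_subset by blast
  have e: "sq (\<lambda>Y. g0 k Y + p Y) X i j = sq (g0 k) X i j + sq p X i j" by (rule sq_add)
  from g0_sq_cases[OF fin ij(3,4,5), of k]
  show "sq (\<lambda>Y. g0 k Y + p Y) X i j \<ge> 0"
  proof
    assume "sq (g0 k) X i j \<ge> 1" then show ?thesis using e b[of X i j] by simp
  next
    assume "\<exists>l<k. i \<in> pr l \<and> j \<in> pr l \<and> stage k (Suc l) X \<and> sq (g0 k) X i j \<ge> 0"
    then obtain l where l: "l < k" "i \<in> pr l" "j \<in> pr l" "stage k (Suc l) X" "sq (g0 k) X i j \<ge> 0" by blast
    have "(i = 2*l \<and> j = Suc (2*l)) \<or> (i = Suc (2*l) \<and> j = 2*l)" using l ij unfolding pr_def by auto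
    then have "sq p X i j \<ge> 0" using nd[OF l(1,4)] sq_sym[of p X i j] by auto
    then show ?thesis using e l by simp
  qed
qed

lemma leaf_node: assumes "stage k 0 T" "stage k (Suc l) P" "l < k"
  shows "sq (pQ k T) P (2*l) (Suc (2*l)) \<ge> 0"
  using sq_pQ_node[OF assms(2,3), of T] stage_pair_one[OF assms(1) _ assms(3)] by auto

lemma B_node: assumes "stage k (Suc l0) P0" "l0 < k" "stage k (Suc l) P" "l < k"
  shows "sq (\<lambda>Y. pQ k P0 Y - ex (insert (2*l0) (insert (Suc (2*l0)) P0)) Y) P (2*l) (Suc (2*l)) \<ge> 0"
proof -
  let ?x = "insert (2*l0) (insert (Suc (2*l0)) P0)"
  have e: "sq (\<lambda>Y. pQ k P0 Y - ex ?x Y) P (2*l) (Suc (2*l)) = sq (pQ k P0) P (2*l) (Suc (2*l)) - sq (ex ?x) P (2*l) (Suc (2*l))"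
    by (rule sq_diff)
  have ns: "\<not> stage k h ?x" for h using B_not_stage[OF assms(1,2)] .
  have s1: "stage k l (insert (2*l) P)" "stage k l (insert (Suc (2*l)) P)" using stage_ins assms(3,4) by auto
  have exs: "sq (ex ?x) P (2*l) (Suc (2*l)) = - ex ?x (insert (2*l) (insert (Suc (2*l)) P))"
  proof -
    have "insert (2*l) P \<noteq> ?x" "insert (Suc (2*l)) P \<noteq> ?x" "P \<noteq> ?x" using ns s1 assms(3) by metis+
    then show ?thesis unfolding sq_def ex_def by simp
  qed
  show ?thesis
  proof (cases "Suc l0 \<le> l")
    case True
    have "sq (pQ k P0) P (2*l) (Suc (2*l)) \<ge> 0"
      using sq_pQ_node[OF assms(3,4), of P0] stage_pair_one[OF assms(1) True assms(4)] by auto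
    then show ?thesis using e exs ex_bounds[of ?x "insert (2*l) (insert (Suc (2*l)) P)"] by simp
  next
    case False
    then have lt: "l < Suc l0" by simp
    have nn: "2*l \<notin> P0" "Suc (2*l) \<notin> P0" using stage_pair_none[OF assms(1) lt] by auto
    show ?thesis
    proof (cases "P \<subseteq> P0")
      case False
      then have "sq (pQ k P0) P (2*l) (Suc (2*l)) = 0" using sq_pQ_node[OF assms(3,4), of P0] by simp
      then show ?thesis using e exs ex_bounds[of ?x "insert (2*l) (insert (Suc (2*l)) P)"] by simp
    next
      case True
      have "l = l0"
      proof (rule ccontr)
        assume "l \<noteq> l0"
        then have "Suc l \<le> l0" using lt by simp
        then have "2*l0 \<in> P \<or> Suc (2*l0) \<in> P" using stage_pair_one[OF assms(3) _ assms(2)] by blast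
        moreover have "2*l0 \<notin> P0" "Suc (2*l0) \<notin> P0" using stage_pair_none[OF assms(1)] by auto
        ultimately show False using True by auto
      qed
      then have "P = P0" using stage_sub_eq[OF assms(3)] assms(1) True by simp
      then have "sq (ex ?x) P (2*l) (Suc (2*l)) = - 1/4" using exs \<open>l = l0\<close> unfolding ex_def by simp
      moreover have "sq (pQ k P0) P (2*l) (Suc (2*l)) = - 1/4" using sq_pQ_node[OF assms(3,4), of P0] True nn by simp
      ultimately show ?thesis using e by simp
    qed
  qed
qed



definition Bp :: "nat \<Rightarrow> nat set set" where
  "Bp k = {Y. \<exists>P l. l < k \<and> stage k (Suc l) P \<and> Y = insert (2*l) (insert (Suc (2*l)) P)}"

definition Dom :: "nat \<Rightarrow> nat set set" where
  "Dom k = {Y. Y = {} \<or> stage k 0 Y \<or> Y \<in> Bp k}"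

definition fv :: "nat \<Rightarrow> nat set \<Rightarrow> real" where
  "fv k Y = g0 k Y + (if Y = {} then 1/4 else 0)"

definition FF :: "nat \<Rightarrow> nat set \<rightharpoonup> real" where
  "FF k = (\<lambda>Y. if Y \<in> Dom k then Some (fv k Y) else None)"

lemma dom_FF: "dom (FF k) = Dom k" unfolding FF_def dom_def by auto

lemma Dom_sub: assumes "2*k \<le> n" shows "Dom k \<subseteq> Pow {..<n}"
proof
  fix Y assume "Y \<in> Dom k"
  then consider "Y = {}" | "stage k 0 Y" | P l where "l < k" "stage k (Suc l) P" "Y = insert (2*l) (insert (Suc (2*l)) P)"
    unfolding Dom_def Bp_def by blast
  then show "Y \<in> Pow {..<n}"
  proof cases
    case 2 then show ?thesis using stage_sub[OF 2] assms by auto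
  next
    case 3 then show ?thesis using stage_sub[OF 3(2)] assms by auto
  qed simp
qed

lemma B_nonempty: "Y \<in> Bp k \<Longrightarrow> Y \<noteq> {}" unfolding Bp_def by auto

lemma not_ext: assumes k: "0 < k" and n: "2*k \<le> n" shows "\<not> extendable n (FF k)"
proof
  assume "extendable n (FF k)"
  then obtain g where g: "submodular n g" "\<And>x. x \<in> dom (FF k) \<Longrightarrow> FF k x = Some (g x)"
    unfolding extendable_def by blast
  have gv: "g Y = fv k Y" if "Y \<in> Dom k" for Y
  proof -
    have "FF k Y = Some (g Y)" using g(2)[of Y] that dom_FF by blast
    then show ?thesis using that unfolding FF_def by simp
  qed
  have claim: "h \<le> k \<Longrightarrow> stage k h P \<Longrightarrow> g P \<le> g0 k P" for h P
  proof (induction h arbitrary: P)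
    case 0
    have "P \<noteq> {}" using leaf_01[OF 0(2) k] by auto
    moreover have "P \<in> Dom k" using 0 unfolding Dom_def by simp
    ultimately show ?case using gv[of P] unfolding fv_def by simp
  next
    case (Suc h)
    have hk: "h < k" using Suc by simp
    have P: "P \<subseteq> {..<n}" "2*h \<notin> P" "Suc (2*h) \<notin> P" using Suc(3) n unfolding stage_def by auto
    have "sq g P (2*h) (Suc (2*h)) \<ge> 0" using submod_sq[OF g(1) P(1) _ _ P(2,3)] hk n by simp
    moreover have "sq (g0 k) P (2*h) (Suc (2*h)) \<le> 0" using g0_node[OF Suc(3) hk] .
    moreover have "g (insert (2*h) P) \<le> g0 k (insert (2*h) P)" "g (insert (Suc (2*h)) P) \<le> g0 k (insert (Suc (2*h)) P)"
      using Suc.IH stage_ins[OF Suc(3) hk] hk by auto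
    moreover have "g (insert (2*h) (insert (Suc (2*h)) P)) = g0 k (insert (2*h) (insert (Suc (2*h)) P))"
    proof -
      have "insert (2*h) (insert (Suc (2*h)) P) \<in> Bp k" unfolding Bp_def using hk Suc(3) by blast
      then show ?thesis using gv B_nonempty unfolding Dom_def fv_def by auto
    qed
    ultimately show ?case unfolding sq_def by linarith
  qed
  have "g {} \<le> g0 k {}" using claim[OF _ stage_empty] by simp
  moreover have "g {} = g0 k {} + 1/4" using gv[of "{}"] unfolding Dom_def fv_def by simp
  ultimately show False by simp
qed

lemma remove_ext: assumes k: "0 < k" and n: "2*k \<le> n" and x: "x \<in> Dom k"
  shows "\<exists>g. submodular n g \<and> (\<forall>Y\<in>Dom k. Y \<noteq> x \<longrightarrow> g Y = fv k Y)"
proof -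
  consider "x = {}" | "stage k 0 x" | P0 l0 where "l0 < k" "stage k (Suc l0) P0" "x = insert (2*l0) (insert (Suc (2*l0)) P0)"
    using x unfolding Dom_def Bp_def by blast
  then show ?thesis
  proof cases
    case 1
    have "submodular n (\<lambda>Y. g0 k Y + (\<lambda>_. 0) Y)"
      by (rule ext_submod[OF n]) (auto simp: sq_def)
    moreover have "\<forall>Y\<in>Dom k. Y \<noteq> x \<longrightarrow> g0 k Y + 0 = fv k Y" using 1 unfolding fv_def by simp
    ultimately show ?thesis by auto
  next
    case 2
    note xl = 2
    have "submodular n (\<lambda>Y. g0 k Y + pQ k x Y)"
    proof (rule ext_submod[OF n])
      fix X i j show "sq (pQ k x) X i j \<ge> -1" using sq_bound(1)[of "pQ k x" X i j] pQ_bounds[of k x] by force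
    next
      fix l P assume "l < k" "stage k (Suc l) P"
      then show "sq (pQ k x) P (2*l) (Suc (2*l)) \<ge> 0" using leaf_node[OF 2] by simp
    qed
    moreover have "g0 k Y + pQ k x Y = fv k Y" if YD: "Y \<in> Dom k" "Y \<noteq> x" for Y
    proof -
      consider "Y = {}" | "stage k 0 Y" | "Y \<in> Bp k" using YD unfolding Dom_def by blast
      then show ?thesis
      proof cases
        case 1 then show ?thesis unfolding pQ_def fv_def using stage_empty by auto
      next
        case 2
        have "Y \<noteq> {}" using leaf_01[OF 2 k] by auto
        moreover have "\<not> Y \<subseteq> x" using stage_sub_eq[OF 2 xl] YD(2) by auto
        ultimately show ?thesis unfolding pQ_def fv_def by auto
      next
        case 3
        then obtain P l where "l < k" "stage k (Suc l) P" "Y = insert (2*l) (insert (Suc (2*l)) P)"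
          unfolding Bp_def by blast
        then have "\<not> stage k h Y" for h using B_not_stage by blast
        moreover have "Y \<noteq> {}" using 3 B_nonempty by auto
        ultimately show ?thesis unfolding pQ_def fv_def by auto
      qed
    qed
    ultimately show ?thesis by blast
  next
    case 3
    note xb = 3
    have "submodular n (\<lambda>Y. g0 k Y + (pQ k P0 Y - ex x Y))"
    proof (rule ext_submod[OF n])
      fix X i j
      have a: "sq (pQ k P0) X i j \<ge> -1/2" by (rule sq_bound(1)) (use pQ_bounds in auto)
      have b: "sq (ex x) X i j \<le> 1/2" by (rule sq_bound(2)) (use ex_bounds in auto)
      show "sq (\<lambda>Y. pQ k P0 Y - ex x Y) X i j \<ge> -1"
        using sq_diff[of "pQ k P0" "ex x" X i j] a b by linarith
    next
      fix l P assume "l < k" "stage k (Suc l) P"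
      then show "sq (\<lambda>Y. pQ k P0 Y - ex x Y) P (2*l) (Suc (2*l)) \<ge> 0"
        using B_node[OF xb(2,1)] xb(3) by simp
    qed
    moreover have "g0 k Y + (pQ k P0 Y - ex x Y) = fv k Y" if YD: "Y \<in> Dom k" "Y \<noteq> x" for Y
    proof -
      have exY: "ex x Y = 0" using YD unfolding ex_def by simp
      consider "Y = {}" | "stage k 0 Y" | "Y \<in> Bp k" using YD unfolding Dom_def by blast
      then show ?thesis
      proof cases
        case 1 then show ?thesis unfolding pQ_def fv_def using stage_empty exY by auto
      next
        case 2
        have "Y \<noteq> {}" using leaf_01[OF 2 k] by auto
        moreover have "\<not> Y \<subseteq> P0" using leaf_01[OF 2 k] stage_no01[OF xb(2)] by auto
        ultimately show ?thesis unfolding pQ_def fv_def using exY by auto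
      next
        case 3
        then obtain P l where "l < k" "stage k (Suc l) P" "Y = insert (2*l) (insert (Suc (2*l)) P)"
          unfolding Bp_def by blast
        then have "\<not> stage k h Y" for h using B_not_stage by blast
        moreover have "Y \<noteq> {}" using 3 B_nonempty by auto
        ultimately show ?thesis unfolding pQ_def fv_def using exY by auto
      qed
    qed
    ultimately show ?thesis by blast
  qed
qed



definition LL :: "nat \<Rightarrow> nat set \<Rightarrow> nat set" where
  "LL k S = (\<lambda>m. 2*m + (if m \<in> S then 1 else 0)) ` {..<k}"

lemma LL_mem: "x \<in> LL k S \<longleftrightarrow> x div 2 < k \<and> (x mod 2 = 1 \<longleftrightarrow> x div 2 \<in> S)"
proof
  assume "x \<in> LL k S"
  then obtain m where "m < k" "x = 2*m + (if m \<in> S then 1 else 0)" unfolding LL_def by auto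
  then show "x div 2 < k \<and> (x mod 2 = 1 \<longleftrightarrow> x div 2 \<in> S)" by (cases "m \<in> S") auto
next
  assume a: "x div 2 < k \<and> (x mod 2 = 1 \<longleftrightarrow> x div 2 \<in> S)"
  have "x = 2*(x div 2) + (if x div 2 \<in> S then 1 else 0)"
  proof (cases "x div 2 \<in> S")
    case True then have "x mod 2 = 1" using a by simp
    then show ?thesis using True by presburger
  next
    case False then have "x mod 2 = 0" using a by presburger
    then show ?thesis using False by presburger
  qed
  then show "x \<in> LL k S" unfolding LL_def using a by blast
qed

lemma LL_stage: "stage k 0 (LL k S)"
  unfolding stage_def
proof (intro conjI allI impI subsetI)
  fix x assume "x \<in> LL k S" then show "x \<in> {2*0..<2*k}" using LL_mem[of x k S] by auto
next
  fix m assume "0 \<le> m" "m < k"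
  then show "(2*m \<in> LL k S) = (Suc (2*m) \<notin> LL k S)" using LL_mem[of "2*m" k S] LL_mem[of "Suc (2*m)" k S] by auto
qed

lemma LL_inj: "inj_on (LL k) (Pow {..<k})"
proof
  fix S S' assume S: "S \<in> Pow {..<k}" "S' \<in> Pow {..<k}" and e: "LL k S = LL k S'"
  show "S = S'"
  proof
    show "S \<subseteq> S'"
    proof
      fix m assume "m \<in> S"
      then have "Suc (2*m) \<in> LL k S" using S LL_mem[of "Suc (2*m)" k S] by auto
      then show "m \<in> S'" using e LL_mem[of "Suc (2*m)" k S'] by auto
    qed
  next
    show "S' \<subseteq> S"
    proof
      fix m assume "m \<in> S'"
      then have "Suc (2*m) \<in> LL k S'" using S LL_mem[of "Suc (2*m)" k S'] by auto
      then show "m \<in> S" using e LL_mem[of "Suc (2*m)" k S] by auto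
    qed
  qed
qed

lemma card_Dom: assumes "2*k \<le> n" shows "2^k \<le> card (Dom k)"
proof -
  have fin: "finite (Dom k)" using Dom_sub[OF assms] finite_subset by (metis finite_Pow_iff finite_lessThan)
  have sub: "LL k ` Pow {..<k} \<subseteq> Dom k" using LL_stage unfolding Dom_def by auto
  have "card (LL k ` Pow {..<k}) = 2^k" using card_image[OF LL_inj] by (simp add: card_Pow)
  then show ?thesis using card_mono[OF fin sub] by simp
qed

theorem theorem2:
  shows "\<exists>c::real. c > 0 \<and> (\<exists>N::nat. \<forall>n\<ge>N. \<exists>f.
           partial_fun_on n f \<and> minimally_non_extendable n f \<and>
           real (card (dom f)) \<ge> 2 powr (c * real n))"
proof -
  have main: "\<exists>f. partial_fun_on n f \<and> minimally_non_extendable n f \<and> real (card (dom f)) \<ge> 2 powr (1/4 * real n)"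
    if n2: "2 \<le> n" for n :: nat
  proof -
  define k where "k = n div 2"
  have k: "0 < k" "2*k \<le> n" using n2 unfolding k_def by auto
  show ?thesis
  proof (intro exI conjI)
    show "partial_fun_on n (FF k)" unfolding partial_fun_on_def dom_FF using Dom_sub[OF k(2)] .
    show "minimally_non_extendable n (FF k)" unfolding minimally_non_extendable_def
    proof (intro conjI allI impI)
      show "\<not> extendable n (FF k)" using not_ext[OF k] .
    next
      fix A assume A: "A \<subset> dom (FF k)"
      then obtain x where x: "x \<in> Dom k" "x \<notin> A" unfolding dom_FF by blast
      obtain g where g: "submodular n g" "\<forall>Y\<in>Dom k. Y \<noteq> x \<longrightarrow> g Y = fv k Y"
        using remove_ext[OF k x(1)] by blast
      show "extendable n (FF k |` A)" unfolding extendable_def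
      proof (intro exI conjI ballI)
        show "submodular n g" by (rule g(1))
      next
        fix y assume y: "y \<in> dom (FF k |` A)"
        then have "y \<in> A" "y \<in> dom (FF k)" by (auto simp: restrict_map_def split: if_splits)
        then have "y \<in> A" "y \<in> Dom k" using dom_FF by auto
        then show "(FF k |` A) y = Some (g y)" using g(2) x(2) unfolding FF_def by auto
      qed
    qed
    have "2 powr (1/4 * real n) \<le> 2 powr (real k)"
    proof (rule powr_mono)
      have "real n \<le> 2 * real k + 1" using k_def by linarith
      then show "1/4 * real n \<le> real k" using n2 by linarith
    qed simp
    also have "\<dots> = 2 ^ k" by (simp add: powr_realpow)
    also have "\<dots> \<le> real (card (dom (FF k)))" using card_Dom[OF k(2)] unfolding dom_FF
      by (metis of_nat_le_iff of_nat_numeral of_nat_power)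
    finally show "real (card (dom (FF k))) \<ge> 2 powr (1/4 * real n)" .
  qed
  qed
  have "(1/4::real) > 0 \<and> (\<exists>N::nat. \<forall>n\<ge>N. \<exists>f. partial_fun_on n f \<and> minimally_non_extendable n f \<and>
           real (card (dom f)) \<ge> 2 powr (1/4 * real n))" using main by auto
  then show ?thesis by blast
qed

end
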